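(* Let $a,b,n$ be positive integers with $a\le b$. If a $(b,a,n)$ strategy exists, then a $(b,\lfloor b/a\rfloor\cdot n)$ strategy for the GKS game exists.
   Context: The GKS game with parameter $n$ (a positive integer). A strategy pair $(S,T)$ consists of a function $S$ assigning a bit in $\{0,1\}$ to every sequence $\pi_1\pi_2\ldots\pi_i$ of distinct elements of $[n]=\{1,\dots,n\}$ with $1\le i\le n-1$, and a function $T:\{0,1\}^n\to 2^{[n]}$. For a permutation $\pi=\pi_1\ldots\pi_n$ of $[n]$ and a bit $b$, the final array $A_{\rm final}\in\{0,1\}^n$ is defined by $A_{\rm final}[\pi_i]=S(\pi_1\ldots\pi_i)$ for $1\le i\le n-1$ and $A_{\rm final}[\pi_n]=b$. The pair $(S,T)$ is a $(k,n)$ strategy if for every permutation $\pi$ of $[n]$ and every bit $b$ we have $\pi_n\in T(A_{\rm final})$, and moreover $|T(\sigma)|\le k$ for every $\sigma\in\{0,1\}^n$. A $(k,k_A,n)$ strategy is a $(k,n)$ strategy $(S,T)$ in which $S$ is additionally defined on all full permutations $\pi_1\ldots\pi_n$ of $[n]$ ("Alice-mode"), such that, letting $\mathcal{O}_A$ be the set of all arrays $A\in\{0,1\}^n$ with $A[\pi_i]=S(\pi_1\ldots\pi_i)$ for all $1\le i\le n$, for some permutation $\pi$ of $[n]$, we have $|T(\sigma)|\le k_A$ for every $\sigma\in\mathcal{O}_A$. *)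

theory Defs
  imports Main
begin

(* Elements of [n] are the naturals 1..n.
   An array in {0,1}^n is a bool list of length n; position j in [n] is
   stored at list index j-1. *)

definition perms :: "nat \<Rightarrow> nat list set" where
  "perms n = {\<pi>. distinct \<pi> \<and> set \<pi> = {1..n}}"

definition is_final_array :: "nat \<Rightarrow> (nat list \<Rightarrow> bool) \<Rightarrow> nat list \<Rightarrow> bool \<Rightarrow> bool list \<Rightarrow> bool" where
  "is_final_array n S \<pi> b A \<longleftrightarrow>
     length A = n \<and>
     (\<forall>i. i + 1 < n \<longrightarrow> A ! (\<pi> ! i - 1) = S (take (i + 1) \<pi>)) \<and>
     A ! (\<pi> ! (n - 1) - 1) = b"

definition kn_strategy :: "nat \<Rightarrow> nat \<Rightarrow> (nat list \<Rightarrow> bool) \<Rightarrow> (bool list \<Rightarrow> nat set) \<Rightarrow> bool" where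
  "kn_strategy k n S T \<longleftrightarrow>
     (\<forall>\<pi>\<in>perms n. \<forall>b A. is_final_array n S \<pi> b A \<longrightarrow> \<pi> ! (n - 1) \<in> T A) \<and>
     (\<forall>\<sigma>. length \<sigma> = n \<longrightarrow> T \<sigma> \<subseteq> {1..n} \<and> card (T \<sigma>) \<le> k)"

definition alice_outcomes :: "nat \<Rightarrow> (nat list \<Rightarrow> bool) \<Rightarrow> bool list set" where
  "alice_outcomes n S = {A. length A = n \<and>
     (\<exists>\<pi>\<in>perms n. \<forall>i<n. A ! (\<pi> ! i - 1) = S (take (i + 1) \<pi>))}"

definition kkA_strategy :: "nat \<Rightarrow> nat \<Rightarrow> nat \<Rightarrow> (nat list \<Rightarrow> bool) \<Rightarrow> (bool list \<Rightarrow> nat set) \<Rightarrow> bool" where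
  "kkA_strategy k kA n S T \<longleftrightarrow>
     kn_strategy k n S T \<and> (\<forall>\<sigma>\<in>alice_outcomes n S. card (T \<sigma>) \<le> kA)"

end

theory Submission
  imports Defs
begin

definition blk :: "nat \<Rightarrow> nat \<Rightarrow> nat" where "blk n x = (x - 1) div n"
definition loc :: "nat \<Rightarrow> nat \<Rightarrow> nat" where "loc n x = x - blk n x * n"
definition Sb :: "nat \<Rightarrow> (nat list \<Rightarrow> bool) \<Rightarrow> nat list \<Rightarrow> bool" where
  "Sb n S p = S (map (loc n) (filter (\<lambda>x. blk n x = blk n (last p)) p))"
definition blockarr :: "nat \<Rightarrow> bool list \<Rightarrow> nat \<Rightarrow> bool list" where
  "blockarr n A j = take n (drop (j*n) A)"
definition Lb :: "nat \<Rightarrow> (bool list \<Rightarrow> nat set) \<Rightarrow> bool list \<Rightarrow> nat \<Rightarrow> nat set" where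
  "Lb n T A j = (\<lambda>x. x + j*n) ` T (blockarr n A j)"
definition Tb :: "nat \<Rightarrow> nat \<Rightarrow> nat \<Rightarrow> (bool list \<Rightarrow> nat set) \<Rightarrow> bool list \<Rightarrow> nat set" where
  "Tb m n a T A = (if \<exists>j<m. a < card (T (blockarr n A j))
      then Lb n T A (SOME j. j < m \<and> a < card (T (blockarr n A j)))
      else (\<Union>j<m. Lb n T A j))"

lemma filter_take_idx:
  "k < length (filter P xs) \<Longrightarrow> \<exists>i<length xs. P (xs!i) \<and> xs!i = filter P xs ! k \<and>
     filter P (take (Suc i) xs) = take (Suc k) (filter P xs)"
proof (induction xs arbitrary: k)
  case Nil then show ?case by simp
next
  case (Cons x xs)
  show ?case
  proof (cases "P x")
    case True
    show ?thesis
    proof (cases k)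
      case 0 then show ?thesis using True by (intro exI[of _ 0]) auto
    next
      case (Suc k')
      then have "k' < length (filter P xs)" using Cons.prems True by simp
      from Cons.IH[OF this] obtain i where "i<length xs" "P (xs!i)" "xs!i = filter P xs ! k'"
        "filter P (take (Suc i) xs) = take (Suc k') (filter P xs)" by blast
      then show ?thesis using True Suc by (intro exI[of _ "Suc i"]) auto
    qed
  next
    case False
    then have "k < length (filter P xs)" using Cons.prems by simp
    from Cons.IH[OF this] obtain i where "i<length xs" "P (xs!i)" "xs!i = filter P xs ! k"
        "filter P (take (Suc i) xs) = take (Suc k) (filter P xs)" by blast
    then show ?thesis using False by (intro exI[of _ "Suc i"]) auto
  qed
qed

lemma blk_iff: "0 < n \<Longrightarrow> 1 \<le> x \<Longrightarrow> blk n x = j \<longleftrightarrow> j*n < x \<and> x \<le> j*n + n"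
  unfolding blk_def
proof
  assume a: "0<n" "1\<le>x" "(x - 1) div n = j"
  have e: "n * j + (x-1) mod n = x - 1" using a(3) by (metis div_mult_mod_eq mult.commute)
  moreover have "(x-1) mod n < n" using a by simp
  ultimately show "j*n < x \<and> x \<le> j*n + n" using a(2) by (simp add: mult.commute) linarith
next
  assume a: "0<n" "1\<le>x" "j*n < x \<and> x \<le> j*n + n"
  show "(x - 1) div n = j" by (rule div_nat_eqI) (use a in \<open>auto simp: mult.commute\<close>)
qed

lemma loc_eq: "blk n x = j \<Longrightarrow> loc n x = x - j*n"
  by (simp add: loc_def)

lemma perm_len: "\<pi> \<in> perms N \<Longrightarrow> length \<pi> = N"
  unfolding perms_def using distinct_card[of \<pi>] by simp

lemma block_set: "0<n \<Longrightarrow> j < m \<Longrightarrow> {x \<in> {1..m*n}. blk n x = j} = {j*n+1..j*n+n}"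
proof -
  assume a: "0<n" "j<m"
  have "j*n + n \<le> m*n" using a by (metis Suc_leI add.commute mult_Suc mult_le_mono1)
  show ?thesis
  proof (intro set_eqI iffI)
    fix x assume "x \<in> {x \<in> {1..m*n}. blk n x = j}"
    then show "x \<in> {j*n+1..j*n+n}" using blk_iff[OF a(1), of x j] by auto
  next
    fix x assume h: "x \<in> {j*n+1..j*n+n}"
    then have "blk n x = j" using blk_iff[OF a(1), of x j] by auto
    then show "x \<in> {x \<in> {1..m*n}. blk n x = j}" using h \<open>j*n + n \<le> m*n\<close> by auto
  qed
qed

lemma perm_block:
  assumes n: "0<n" and p: "\<pi> \<in> perms (m*n)" and j: "j<m"
  shows "map (loc n) (filter (\<lambda>x. blk n x = j) \<pi>) \<in> perms n"
proof -
  have sf: "set (filter (\<lambda>x. blk n x = j) \<pi>) = {j*n+1..j*n+n}"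
    using p block_set[OF n j] unfolding perms_def by auto
  have li: "\<And>x. x \<in> {j*n+1..j*n+n} \<Longrightarrow> loc n x = x - j*n"
  proof -
    fix x assume "x \<in> {j*n+1..j*n+n}"
    then have "blk n x = j" using blk_iff[OF n, of x j] by auto
    then show "loc n x = x - j*n" by (rule loc_eq)
  qed
  have inj: "inj_on (loc n) {j*n+1..j*n+n}"
  proof (rule inj_onI)
    fix x y assume hx: "x \<in> {j*n+1..j*n+n}" and hy: "y \<in> {j*n+1..j*n+n}" and e: "loc n x = loc n y"
    have "x - j*n = y - j*n" using li[OF hx] li[OF hy] e by simp
    moreover have "j*n \<le> x" "j*n \<le> y" using hx hy by auto
    ultimately show "x = y" by linarith
  qed
  have "(loc n) ` {j*n+1..j*n+n} = {1..n}"
  proof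
    show "loc n ` {j * n + 1..j * n + n} \<subseteq> {1..n}" using li by auto
    show "{1..n} \<subseteq> loc n ` {j * n + 1..j * n + n}"
    proof
      fix y assume "y \<in> {1..n}"
      then have "y + j*n \<in> {j*n+1..j*n+n}" "loc n (y + j*n) = y" using li by auto
      then show "y \<in> loc n ` {j * n + 1..j * n + n}" by (metis image_eqI)
    qed
  qed
  moreover have "distinct (filter (\<lambda>x. blk n x = j) \<pi>)" using p unfolding perms_def by simp
  ultimately show ?thesis using sf inj unfolding perms_def
    by (simp only: distinct_map set_map mem_Collect_eq)
qed

lemma block_idx:
  assumes n: "0<n" and p: "\<pi> \<in> perms (m*n)" and j: "j<m" and k: "k<n"
  shows "\<exists>i<m*n. \<pi>!i = map (loc n) (filter (\<lambda>x. blk n x = j) \<pi>) ! k + j*n \<and>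
    take (Suc k) (map (loc n) (filter (\<lambda>x. blk n x = j) \<pi>)) = map (loc n) (filter (\<lambda>x. blk n x = j) (take (Suc i) \<pi>)) \<and>
    blk n (\<pi>!i) = j \<and> map (loc n) (filter (\<lambda>x. blk n x = j) \<pi>) ! k \<in> {1..n}"
proof -
  define \<rho> where "\<rho> = map (loc n) (filter (\<lambda>x. blk n x = j) \<pi>)"
  have rp: "\<rho> \<in> perms n" unfolding \<rho>_def by (rule perm_block[OF n p j])
  have lr: "length \<rho> = n" using perm_len[OF rp] .
  then have "k < length (filter (\<lambda>x. blk n x = j) \<pi>)" using k unfolding \<rho>_def by simp
  from filter_take_idx[OF this] obtain i where i: "i < length \<pi>" "blk n (\<pi>!i) = j"
    "\<pi>!i = filter (\<lambda>x. blk n x = j) \<pi> ! k"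
    "filter (\<lambda>x. blk n x = j) (take (Suc i) \<pi>) = take (Suc k) (filter (\<lambda>x. blk n x = j) \<pi>)" by blast
  have im: "i < m*n" using i(1) perm_len[OF p] by simp
  have rk: "\<rho>!k = loc n (\<pi>!i)" unfolding \<rho>_def using i(3) \<open>k < length _\<close> by simp
  have "\<pi>!i \<in> {1..m*n}" using nth_mem[OF i(1)] p unfolding perms_def by auto
  then have "j*n < \<pi>!i" using blk_iff[OF n, of "\<pi>!i" j] i(2) by auto
  then have e1: "\<pi>!i = \<rho>!k + j*n" using rk loc_eq[OF i(2)] by simp
  have "\<rho>!k \<in> set \<rho>" using lr k by simp
  then have e2: "\<rho>!k \<in> {1..n}" using rp unfolding perms_def by auto
  have e3: "take (Suc k) \<rho> = map (loc n) (filter (\<lambda>x. blk n x = j) (take (Suc i) \<pi>))"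
    unfolding \<rho>_def using i(4) by (simp add: take_map)
  show ?thesis using im e1 e2 e3 i(2) unfolding \<rho>_def by blast
qed

lemma Sb_eval: "i < length \<pi> \<Longrightarrow>
  Sb n S (take (Suc i) \<pi>) = S (map (loc n) (filter (\<lambda>x. blk n x = blk n (\<pi>!i)) (take (Suc i) \<pi>)))"
proof -
  assume "i < length \<pi>"
  then have "last (take (Suc i) \<pi>) = \<pi>!i" by (simp add: take_Suc_conv_app_nth)
  then show ?thesis unfolding Sb_def by simp
qed

lemma blockarr_len: "length A = m*n \<Longrightarrow> j<m \<Longrightarrow> length (blockarr n A j) = n"
proof -
  assume a: "length A = m*n" "j<m"
  have "j*n + n \<le> m*n" using a by (metis Suc_leI add.commute mult_Suc mult_le_mono1)
  then show ?thesis using a unfolding blockarr_def by simp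
qed

lemma blockarr_nth: "length A = m*n \<Longrightarrow> j<m \<Longrightarrow> l \<in> {1..n} \<Longrightarrow>
   blockarr n A j ! (l - 1) = A ! (l + j*n - 1)"
proof -
  assume a: "length A = m*n" "j<m" "l \<in> {1..n}"
  have "j*n + n \<le> m*n" using a by (metis Suc_leI add.commute mult_Suc mult_le_mono1)
  have l: "l - 1 < n" "1 \<le> l" using a(3) by auto
  have "blockarr n A j ! (l - 1) = drop (j*n) A ! (l - 1)" unfolding blockarr_def using l by simp
  also have "\<dots> = A ! (j*n + (l - 1))" using a(1) \<open>j*n + n \<le> m*n\<close> by (intro nth_drop) linarith
  also have "j*n + (l - 1) = l + j*n - 1" using l by simp
  finally show ?thesis .
qed

theorem lemma4:
  fixes a b n :: nat
  assumes "0 < a" and "0 < b" and "0 < n" and "a \<le> b"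
    and "\<exists>S T. kkA_strategy b a n S T"
  shows "\<exists>S T. kn_strategy b (b div a * n) S T"
proof -
  obtain S T where st: "kkA_strategy b a n S T" using assms(5) by blast
  define m where "m = b div a"
  have npos: "0 < n" using assms(3) .
  have mpos: "0 < m" unfolding m_def using assms(1,4) by (simp add: div_greater_zero_iff)
  have mab: "m * a \<le> b" unfolding m_def by (simp add: div_times_less_eq_dividend)
  have TS: "\<And>\<sigma>. length \<sigma> = n \<Longrightarrow> T \<sigma> \<subseteq> {1..n} \<and> card (T \<sigma>) \<le> b"
    using st unfolding kkA_strategy_def kn_strategy_def by blast
  have win: "\<And>\<rho> \<beta> A. \<rho> \<in> perms n \<Longrightarrow> is_final_array n S \<rho> \<beta> A \<Longrightarrow> \<rho>!(n-1) \<in> T A"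
    using st unfolding kkA_strategy_def kn_strategy_def by blast
  have alice: "\<And>\<sigma>. \<sigma> \<in> alice_outcomes n S \<Longrightarrow> card (T \<sigma>) \<le> a"
    using st unfolding kkA_strategy_def by blast
  have Lsub: "\<And>(\<sigma>::bool list) j. length \<sigma> = m*n \<Longrightarrow> j < m \<Longrightarrow> Lb n T \<sigma> j \<subseteq> {1..m*n} \<and> card (Lb n T \<sigma> j) = card (T (blockarr n \<sigma> j))"
  proof -
    fix \<sigma> :: "bool list" and j :: nat assume h: "length \<sigma> = m*n" "j < m"
    have "j*n + n \<le> m*n" using h by (metis Suc_leI add.commute mult_Suc mult_le_mono1)
    moreover have "T (blockarr n \<sigma> j) \<subseteq> {1..n}" using TS blockarr_len[OF h] by blast
    ultimately have "Lb n T \<sigma> j \<subseteq> {1..m*n}" unfolding Lb_def by force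
    moreover have "card (Lb n T \<sigma> j) = card (T (blockarr n \<sigma> j))" unfolding Lb_def
      by (rule card_image) (simp add: inj_on_def)
    ultimately show "Lb n T \<sigma> j \<subseteq> {1..m*n} \<and> card (Lb n T \<sigma> j) = card (T (blockarr n \<sigma> j))" by blast
  qed
  have part2: "\<forall>\<sigma>. length \<sigma> = m*n \<longrightarrow> Tb m n a T \<sigma> \<subseteq> {1..m*n} \<and> card (Tb m n a T \<sigma>) \<le> b"
  proof (intro allI impI)
    fix \<sigma> :: "bool list" assume len: "length \<sigma> = m*n"
    show "Tb m n a T \<sigma> \<subseteq> {1..m*n} \<and> card (Tb m n a T \<sigma>) \<le> b"
    proof (cases "\<exists>j<m. a < card (T (blockarr n \<sigma> j))")
      case True
      define j where "j = (SOME j. j < m \<and> a < card (T (blockarr n \<sigma> j)))"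
      have j: "j < m" using someI_ex[OF True] unfolding j_def by blast
      have "Tb m n a T \<sigma> = Lb n T \<sigma> j" unfolding Tb_def j_def by (rule if_P[OF True])
      then show ?thesis using Lsub[OF len j] TS[OF blockarr_len[OF len j]] by simp
    next
      case False
      have eq: "Tb m n a T \<sigma> = (\<Union>j<m. Lb n T \<sigma> j)" unfolding Tb_def by (rule if_not_P[OF False])
      have "card (\<Union>j<m. Lb n T \<sigma> j) \<le> (\<Sum>j<m. card (Lb n T \<sigma> j))" by (rule card_UN_le) simp
      also have "\<dots> \<le> (\<Sum>j<m. a)"
      proof (rule sum_mono)
        fix j assume "j \<in> {..<m}"
        then have "j < m" by simp
        then have "\<not> a < card (T (blockarr n \<sigma> j))" using False by blast
        then show "card (Lb n T \<sigma> j) \<le> a" using Lsub[OF len \<open>j<m\<close>] by simp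
      qed
      also have "\<dots> = m * a" by simp
      finally have "card (\<Union>j<m. Lb n T \<sigma> j) \<le> b" using mab by linarith
      moreover have "(\<Union>j<m. Lb n T \<sigma> j) \<subseteq> {1..m*n}" using Lsub[OF len] by blast
      ultimately show ?thesis using eq by simp
    qed
  qed
  have part1: "\<forall>\<pi>\<in>perms (m*n). \<forall>\<beta> A. is_final_array (m*n) (Sb n S) \<pi> \<beta> A \<longrightarrow> \<pi> ! (m*n - 1) \<in> Tb m n a T A"
  proof (intro ballI allI impI)
    fix \<pi> \<beta> A assume p: "\<pi> \<in> perms (m*n)" and fa: "is_final_array (m*n) (Sb n S) \<pi> \<beta> A"
    define N where "N = m*n"
    have Npos: "0 < N" unfolding N_def using mpos npos by simp
    have lp: "length \<pi> = N" using perm_len[OF p] unfolding N_def .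
    have lA: "length A = m*n" using fa unfolding is_final_array_def by simp
    have fA: "\<And>i. i + 1 < N \<Longrightarrow> A ! (\<pi> ! i - 1) = Sb n S (take (i + 1) \<pi>)"
      using fa unfolding is_final_array_def N_def by blast
    have fB: "A ! (\<pi> ! (N - 1) - 1) = \<beta>" using fa unfolding is_final_array_def N_def by blast
    define c where "c = \<pi> ! (N - 1)"
    have cN: "c \<in> {1..N}" using nth_mem[of "N-1" \<pi>] lp Npos p unfolding c_def perms_def N_def by auto
    define j0 where "j0 = blk n c"
    have "j0*n < c" "c \<le> j0*n + n" using blk_iff[OF npos, of c j0] cN unfolding j0_def by auto
    have "c \<le> m*n" using cN unfolding N_def by simp
    then have "j0*n < m*n" using \<open>j0*n < c\<close> by linarith
    then have j0m: "j0 < m" using mult_less_cancel2 by blast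
    define \<rho> where "\<rho> = (\<lambda>j. map (loc n) (filter (\<lambda>x. blk n x = j) \<pi>))"
    have val: "\<And>j k i. j < m \<Longrightarrow> i < N \<Longrightarrow> i + 1 < N \<Longrightarrow> \<pi>!i = \<rho> j ! k + j*n \<Longrightarrow>
        take (Suc k) (\<rho> j) = map (loc n) (filter (\<lambda>x. blk n x = j) (take (Suc i) \<pi>)) \<Longrightarrow>
        blk n (\<pi>!i) = j \<Longrightarrow> \<rho> j ! k \<in> {1..n} \<Longrightarrow>
        blockarr n A j ! (\<rho> j ! k - 1) = S (take (Suc k) (\<rho> j))"
    proof -
      fix j k i assume h: "j < m" "i < N" "i + 1 < N" "\<pi>!i = \<rho> j ! k + j*n"
        "take (Suc k) (\<rho> j) = map (loc n) (filter (\<lambda>x. blk n x = j) (take (Suc i) \<pi>))"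
        "blk n (\<pi>!i) = j" "\<rho> j ! k \<in> {1..n}"
      have "blockarr n A j ! (\<rho> j ! k - 1) = A ! (\<rho> j ! k + j*n - 1)"
        by (rule blockarr_nth[OF lA h(1) h(7)])
      also have "\<dots> = A ! (\<pi> ! i - 1)" using h(4) by simp
      also have "\<dots> = Sb n S (take (Suc i) \<pi>)" using fA[OF h(3)] by simp
      also have "\<dots> = S (take (Suc k) (\<rho> j))" using Sb_eval[of i \<pi> n S] h(2,5,6) lp by simp
      finally show "blockarr n A j ! (\<rho> j ! k - 1) = S (take (Suc k) (\<rho> j))" .
    qed
    have other: "\<And>j. j < m \<Longrightarrow> j \<noteq> j0 \<Longrightarrow> card (T (blockarr n A j)) \<le> a"
    proof -
      fix j assume j: "j < m" "j \<noteq> j0"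
      have "blockarr n A j \<in> alice_outcomes n S"
        unfolding alice_outcomes_def
      proof (intro CollectI conjI bexI allI impI)
        show "length (blockarr n A j) = n" by (rule blockarr_len[OF lA j(1)])
        show "\<rho> j \<in> perms n" unfolding \<rho>_def by (rule perm_block[OF npos p j(1)])
        fix k assume k: "k < n"
        from block_idx[OF npos p j(1) k] obtain i where i: "i < m*n" "\<pi>!i = \<rho> j ! k + j*n"
          "take (Suc k) (\<rho> j) = map (loc n) (filter (\<lambda>x. blk n x = j) (take (Suc i) \<pi>))"
          "blk n (\<pi>!i) = j" "\<rho> j ! k \<in> {1..n}" unfolding \<rho>_def by blast
        have "i \<noteq> N - 1" using i(4) j(2) unfolding j0_def c_def by auto
        then have "i + 1 < N" using i(1) unfolding N_def by simp
        then show "blockarr n A j ! (\<rho> j ! k - 1) = S (take (k + 1) (\<rho> j))"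
          using val[OF j(1) _ _ i(2,3,4,5)] i(1) unfolding N_def by simp
      qed
      then show "card (T (blockarr n A j)) \<le> a" by (rule alice)
    qed
    have rp0: "\<rho> j0 \<in> perms n" unfolding \<rho>_def by (rule perm_block[OF npos p j0m])
    have lr0: "length (\<rho> j0) = n" by (rule perm_len[OF rp0])
    have lastc: "\<rho> j0 ! (n - 1) = loc n c"
    proof -
      have ne: "\<pi> \<noteq> []" using lp Npos by auto
      have lc: "last \<pi> = c" unfolding c_def using ne lp by (simp add: last_conv_nth)
      have pe: "\<pi> = butlast \<pi> @ [c]" using append_butlast_last_id[OF ne] lc by simp
      have "filter (\<lambda>x. blk n x = j0) \<pi> = filter (\<lambda>x. blk n x = j0) (butlast \<pi> @ [c])"
        by (subst pe[symmetric]) (rule refl)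
      also have "\<dots> = filter (\<lambda>x. blk n x = j0) (butlast \<pi>) @ [c]"
        by (simp add: j0_def)
      finally have "filter (\<lambda>x. blk n x = j0) \<pi> = filter (\<lambda>x. blk n x = j0) (butlast \<pi>) @ [c]" .
      then have "last (\<rho> j0) = loc n c" unfolding \<rho>_def by simp
      moreover have "\<rho> j0 \<noteq> []" using lr0 npos by auto
      ultimately show ?thesis using lr0 by (simp add: last_conv_nth)
    qed
    have locc: "loc n c \<in> {1..n}" "loc n c + j0*n = c"
      using loc_eq[of n c j0] \<open>j0*n < c\<close> \<open>c \<le> j0*n + n\<close> unfolding j0_def by auto
    have final0: "is_final_array n S (\<rho> j0) \<beta> (blockarr n A j0)"
      unfolding is_final_array_def
    proof (intro conjI allI impI)
      show "length (blockarr n A j0) = n" by (rule blockarr_len[OF lA j0m])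
      fix k assume k1: "k + 1 < n"
      then have k: "k < n" by simp
      from block_idx[OF npos p j0m k] obtain i where i: "i < m*n" "\<pi>!i = \<rho> j0 ! k + j0*n"
          "take (Suc k) (\<rho> j0) = map (loc n) (filter (\<lambda>x. blk n x = j0) (take (Suc i) \<pi>))"
          "blk n (\<pi>!i) = j0" "\<rho> j0 ! k \<in> {1..n}" unfolding \<rho>_def by blast
      have "i \<noteq> N - 1"
      proof
        assume "i = N - 1"
        then have "take (Suc i) \<pi> = \<pi>" using lp Npos by simp
        then have "take (Suc k) (\<rho> j0) = \<rho> j0" using i(3) unfolding \<rho>_def by simp
        then have "length (take (Suc k) (\<rho> j0)) = n" using lr0 by simp
        then show False using k1 lr0 by simp
      qed
      then have "i + 1 < N" using i(1) unfolding N_def by simp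
      then show "blockarr n A j0 ! (\<rho> j0 ! k - 1) = S (take (k + 1) (\<rho> j0))"
        using val[OF j0m _ _ i(2,3,4,5)] i(1) unfolding N_def by simp
    next
      have "blockarr n A j0 ! (\<rho> j0 ! (n - 1) - 1) = A ! (loc n c + j0*n - 1)"
        using lastc blockarr_nth[OF lA j0m locc(1)] by simp
      also have "\<dots> = \<beta>" using locc(2) fB unfolding c_def by simp
      finally show "blockarr n A j0 ! (\<rho> j0 ! (n - 1) - 1) = \<beta>" .
    qed
    have "loc n c \<in> T (blockarr n A j0)" using win[OF rp0 final0] lastc by simp
    then have cin: "c \<in> Lb n T A j0" unfolding Lb_def using locc(2) by force
    show "\<pi> ! (m*n - 1) \<in> Tb m n a T A"
    proof (cases "\<exists>j<m. a < card (T (blockarr n A j))")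
      case True
      define j where "j = (SOME j. j < m \<and> a < card (T (blockarr n A j)))"
      have j: "j < m" "a < card (T (blockarr n A j))" using someI_ex[OF True] unfolding j_def by blast+
      have "j = j0" using other[OF j(1)] j(2) by fastforce
      moreover have "Tb m n a T A = Lb n T A j" unfolding Tb_def j_def by (rule if_P[OF True])
      ultimately show ?thesis using cin unfolding c_def N_def by simp
    next
      case False
      have "Tb m n a T A = (\<Union>j<m. Lb n T A j)" unfolding Tb_def by (rule if_not_P[OF False])
      then show ?thesis using cin j0m unfolding c_def N_def by auto
    qed
  qed
  have "kn_strategy b (m*n) (Sb n S) (Tb m n a T)"
    unfolding kn_strategy_def using part1 part2 by blast
  then show ?thesis unfolding m_def by blast
qed

end
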